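(* Let $\varepsilon\in(0,1)$, $\rho\in\mathcal{D}$, and $X$ a Hermitian operator with $\operatorname{tr}[X]=1$. Then $D_{\min,\varepsilon}(\rho\|X)=-\log(1-\varepsilon)$ if and only if $\rho=X$.
   Context: $\mathcal{D}$ is the set of density operators on a finite-dimensional Hilbert space. For $\rho\in\mathcal{D}$ and Hermitian $X$, $D_{\min,\varepsilon}(\rho\|X)=-\log\alpha$ where $\alpha=\min\{\operatorname{tr}[EX]:0\le E\le I,\ \operatorname{tr}[\rho(I-E)]\le\varepsilon\}$, with the convention that $D_{\min,\varepsilon}(\rho\|X)=+\infty$ if $\alpha\le0$. *)

theory Defs
  imports "HOL-Analysis.Analysis"
begin

definition conj_transpose :: "complex^'n^'n \<Rightarrow> complex^'n^'n" where
  "conj_transpose A = (\<chi> i j. cnj (A $ j $ i))"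

definition hermitian :: "complex^'n^'n \<Rightarrow> bool" where
  "hermitian A \<longleftrightarrow> conj_transpose A = A"

definition psd :: "complex^'n::finite^'n \<Rightarrow> bool" where
  "psd A \<longleftrightarrow> hermitian A \<and>
     (\<forall>v :: complex^'n. 0 \<le> Re (\<Sum>i\<in>UNIV. cnj (v $ i) * (A *v v) $ i))"

definition density :: "complex^'n::finite^'n \<Rightarrow> bool" where
  "density \<rho> \<longleftrightarrow> psd \<rho> \<and> trace \<rho> = 1"

definition feasible_test :: "real \<Rightarrow> complex^'n::finite^'n \<Rightarrow> complex^'n^'n \<Rightarrow> bool" where
  "feasible_test \<epsilon> \<rho> E \<longleftrightarrow> psd E \<and> psd (mat 1 - E) \<and>
     Re (trace (\<rho> ** (mat 1 - E))) \<le> \<epsilon>"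

text \<open>alpha = min { tr[E X] : E feasible } (trace is real for Hermitian E, X;
  the infimum is attained since the feasible set is compact and nonempty).\<close>
definition alpha_min :: "real \<Rightarrow> complex^'n::finite^'n \<Rightarrow> complex^'n^'n \<Rightarrow> real" where
  "alpha_min \<epsilon> \<rho> X = Inf {Re (trace (E ** X)) | E. feasible_test \<epsilon> \<rho> E}"

definition D_min :: "real \<Rightarrow> complex^'n::finite^'n \<Rightarrow> complex^'n^'n \<Rightarrow> ereal" where
  "D_min \<epsilon> \<rho> X = (let \<alpha> = alpha_min \<epsilon> \<rho> X in
     if \<alpha> \<le> 0 then \<infinity> else ereal (- ln \<alpha>))"

end

theory Submission
  imports Defs
begin


definition sh :: "complex \<Rightarrow> complex \<Rightarrow> complex^'n::finite^'n \<Rightarrow> complex^'n^'n" where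
  "sh a b H = (\<chi> i j. (if i = j then a else 0) + b * H$i$j)"

definition qf :: "complex^'n::finite^'n \<Rightarrow> complex^'n \<Rightarrow> complex" where
  "qf M v = (\<Sum>i\<in>UNIV. cnj (v $ i) * (M *v v) $ i)"

lemma qf_expand: "qf M v = (\<Sum>k\<in>UNIV. \<Sum>l\<in>UNIV. cnj (v$k) * M$k$l * v$l)"
  by (simp add: qf_def matrix_vector_mult_def sum_distrib_left mult.assoc)

lemma qf_sh: "qf (sh a b H) v = a * (\<Sum>k\<in>UNIV. cnj (v$k) * v$k) + b * qf H v"
proof -
  have "qf (sh a b H) v = (\<Sum>k\<in>UNIV. \<Sum>l\<in>UNIV. (if k = l then a * (cnj (v$k) * v$k) else 0) + b * (cnj (v$k) * H$k$l * v$l))"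
    unfolding qf_expand sh_def by (intro sum.cong refl) (auto simp: algebra_simps)
  also have "\<dots> = a * (\<Sum>k\<in>UNIV. cnj (v$k) * v$k) + b * qf H v"
    by (simp add: sum.distrib qf_expand sum_distrib_left)
  finally show ?thesis .
qed

lemma hermitian_sh: "hermitian H \<Longrightarrow> a \<in> \<real> \<Longrightarrow> b \<in> \<real> \<Longrightarrow> hermitian (sh a b H)"
  unfolding hermitian_def conj_transpose_def sh_def
  by (auto simp: vec_eq_iff Reals_cnj_iff elim!: allE dest!: arg_cong[where f="\<lambda>A. A$_$_"])

lemma herm_entry: "hermitian H \<Longrightarrow> H$i$j = cnj (H$j$i)"
  unfolding hermitian_def conj_transpose_def by (metis vec_lambda_beta)

lemma amgm: "(x::real)*y \<le> (x^2+y^2)/2"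
proof -
  have "0 \<le> (x-y)^2" by simp
  then show ?thesis by (simp add: power2_eq_square algebra_simps)
qed

lemma qf_bound: "cmod (qf H v) \<le> (\<Sum>k\<in>UNIV. \<Sum>l\<in>UNIV. cmod (H$k$l)) * (\<Sum>m\<in>UNIV. (cmod (v$m))^2)"
proof -
  let ?N = "\<Sum>m\<in>UNIV. (cmod (v$m))^2"
  have le: "cmod (v$k) * cmod (v$l) \<le> ?N" for k l
  proof -
    have "cmod (v$k) * cmod (v$l) \<le> ((cmod (v$k))^2 + (cmod (v$l))^2)/2"
      by (rule amgm)
    also have "\<dots> \<le> (?N + ?N)/2"
      by (intro divide_right_mono add_mono member_le_sum) auto
    also have "\<dots> = ?N" by simp
    finally show ?thesis .
  qed
  have "cmod (qf H v) \<le> (\<Sum>k\<in>UNIV. \<Sum>l\<in>UNIV. cmod (cnj (v$k) * H$k$l * v$l))"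
    unfolding qf_expand by (rule order_trans[OF norm_sum sum_mono]) (rule norm_sum)
  also have "\<dots> \<le> (\<Sum>k\<in>UNIV. \<Sum>l\<in>UNIV. cmod (H$k$l) * ?N)"
  proof (intro sum_mono)
    fix k l
    have "cmod (cnj (v$k) * H$k$l * v$l) = cmod (H$k$l) * (cmod (v$k) * cmod (v$l))"
      by (simp add: norm_mult)
    also have "\<dots> \<le> cmod (H$k$l) * ?N" by (intro mult_left_mono le) auto
    finally show "cmod (cnj (v$k) * H$k$l * v$l) \<le> cmod (H$k$l) * ?N" .
  qed
  also have "\<dots> = (\<Sum>k\<in>UNIV. \<Sum>l\<in>UNIV. cmod (H$k$l)) * ?N"
    by (simp add: sum_distrib_right)
  finally show ?thesis .
qed

lemma Re_cnj_self: "Re (\<Sum>k\<in>UNIV. cnj (v$k) * v$k) = (\<Sum>m\<in>UNIV. (cmod (v$m))^2)"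
  unfolding Re_sum by (intro sum.cong refl) (simp add: power2_eq_square, metis cmod_power2 power2_eq_square)

lemma psd_sh:
  fixes H :: "complex^'n::finite^'n"
  assumes "hermitian H" "0 \<le> a" "\<bar>t\<bar> * (\<Sum>k\<in>UNIV. \<Sum>l\<in>UNIV. cmod (H$k$l)) \<le> a"
  shows "psd (sh (of_real a) (of_real t) H)"
  unfolding psd_def
proof (intro conjI allI)
  show "hermitian (sh (of_real a) (of_real t) H)" using assms by (intro hermitian_sh) auto
  fix v :: "complex^'n"
  let ?K = "\<Sum>k\<in>UNIV. \<Sum>l\<in>UNIV. cmod (H$k$l)"
  let ?N = "\<Sum>m\<in>UNIV. (cmod (v$m))^2"
  have N0: "0 \<le> ?N" by (auto intro: sum_nonneg)
  have "\<bar>t * Re (qf H v)\<bar> \<le> \<bar>t\<bar> * (?K * ?N)"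
    unfolding abs_mult by (intro mult_left_mono order_trans[OF abs_Re_le_cmod qf_bound]) auto
  also have "\<dots> \<le> a * ?N" using assms(3) N0 by (simp add: mult.assoc[symmetric] mult_right_mono)
  finally have "0 \<le> a * ?N + t * Re (qf H v)" by linarith
  moreover have "Re (qf (sh (of_real a) (of_real t) H) v) = a * ?N + t * Re (qf H v)"
    by (simp add: qf_sh Re_cnj_self del: Re_sum)
  ultimately have "0 \<le> Re (qf (sh (of_real a) (of_real t) H) v)" by linarith
  then show "0 \<le> Re (\<Sum>i\<in>UNIV. cnj (v $ i) * (sh (of_real a) (of_real t) H *v v) $ i)"
    by (simp only: qf_def)
qed



lemma sum_two:
  fixes g :: "'n::finite \<Rightarrow> 'b::comm_monoid_add"
  assumes "i \<noteq> j" "\<And>x. x \<noteq> i \<Longrightarrow> x \<noteq> j \<Longrightarrow> g x = 0"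
  shows "sum g UNIV = g i + g j"
proof -
  have "sum g UNIV = sum g {i,j}"
    by (rule sum.mono_neutral_right) (use assms in auto)
  then show ?thesis using assms by simp
qed

lemma sum_one:
  fixes g :: "'n::finite \<Rightarrow> 'b::comm_monoid_add"
  assumes "\<And>x. x \<noteq> i \<Longrightarrow> g x = 0"
  shows "sum g UNIV = g i"
proof -
  have "sum g UNIV = sum g {i}"
    by (rule sum.mono_neutral_right) (use assms in auto)
  then show ?thesis by simp
qed

lemma qf_axis: "qf M (axis i 1) = M$i$i"
proof -
  have inner: "(M *v axis i 1)$k = M$k$i" for k
    unfolding matrix_vector_mult_def by (simp, subst sum_one[of i]) (auto simp: axis_def)
  show ?thesis unfolding qf_def inner
    by (subst sum_one[of i]) (auto simp: axis_def)
qed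

lemma qf_two:
  assumes "i \<noteq> j"
  shows "qf M (\<chi> k. if k = i then 1 else if k = j then c else 0) =
    M$i$i + M$i$j*c + cnj c * M$j$i + cnj c * c * M$j$j"
proof -
  let ?v = "(\<chi> k. if k = i then 1 else if k = j then c else 0) :: complex^'a"
  have inner: "(M *v ?v)$k = M$k$i + M$k$j * c" for k
    unfolding matrix_vector_mult_def using assms
    by (simp, subst sum_two[OF assms]) auto
  show ?thesis unfolding qf_def inner using assms
    by (subst sum_two[OF assms]) (auto simp: algebra_simps)
qed

lemma Re_diag_nonneg: "psd M \<Longrightarrow> 0 \<le> Re (M$i$i)"
  using qf_axis[of M i] unfolding psd_def qf_def by metis

lemma entry_bound:
  fixes E :: "complex^'n::finite^'n"
  assumes pE: "psd E" and pI: "psd (mat 1 - E)"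
  shows "cmod (E$i$j) \<le> 1"
proof (cases "i = j")
  case True
  have h: "hermitian E" using pE by (simp add: psd_def)
  have "E$i$i = cnj (E$i$i)" using herm_entry[OF h] .
  then have "Im (E$i$i) = 0" by (metis Reals_cnj_iff complex_is_Real_iff)
  moreover have "0 \<le> Re (E$i$i)" by (rule Re_diag_nonneg[OF pE])
  moreover have "0 \<le> Re ((mat 1 - E)$i$i)" by (rule Re_diag_nonneg[OF pI])
  ultimately show ?thesis using True by (simp add: cmod_def mat_def)
next
  case False
  show ?thesis
  proof (cases "E$i$j = 0")
    case True then show ?thesis by simp
  next
    case nz: False
    have h: "hermitian E" using pE by (simp add: psd_def)
    define r where "r = cmod (E$i$j)"
    have r0: "r \<noteq> 0" using nz by (simp add: r_def)
    define c where "c = cnj (E$i$j) / of_real r"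
    have sq: "E$i$j * cnj (E$i$j) = of_real r * of_real r"
      by (simp add: r_def flip: complex_norm_square of_real_mult power2_eq_square)
    have c2: "E$i$j * c = of_real (cmod (E$i$j))"
      using r0 unfolding c_def by (simp add: times_divide_eq_right sq flip: r_def)
    have c1: "cnj c * c = 1"
    proof -
      have "cnj c * c = (E$i$j * cnj (E$i$j)) / (of_real r * of_real r)"
        by (simp add: c_def)
      then show ?thesis using r0 by (simp add: sq)
    qed
    have c3: "cnj c * E$j$i = of_real (cmod (E$i$j))"
      using c2 herm_entry[OF h, of j i] by (metis complex_cnj_cnj complex_cnj_complex_of_real complex_cnj_mult mult.commute)
    let ?v = "(\<chi> k. if k = i then 1 else if k = j then c else 0) :: complex^'n"
    have "0 \<le> Re (qf (mat 1 - E) ?v)" using pI unfolding psd_def qf_def by blast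
    also have "qf (mat 1 - E) ?v = (1 - E$i$i) - E$i$j*c - cnj c * E$j$i + cnj c * c * (1 - E$j$j)"
      unfolding qf_two[OF False] using False by (simp add: mat_def)
    also have "\<dots> = 2 - E$i$i - E$j$j - 2 * of_real (cmod (E$i$j))"
      using c1 c2 c3 by (simp add: algebra_simps)
    finally have "0 \<le> 2 - Re (E$i$i) - Re (E$j$j) - 2 * cmod (E$i$j)" by simp
    moreover have "0 \<le> Re (E$i$i)" "0 \<le> Re (E$j$j)" using Re_diag_nonneg[OF pE] by auto
    ultimately show ?thesis by linarith
  qed
qed

lemma trace_lower:
  fixes E X :: "complex^'n::finite^'n"
  assumes pE: "psd E" and pI: "psd (mat 1 - E)"
  shows "- (\<Sum>i\<in>UNIV. \<Sum>k\<in>UNIV. cmod (X$k$i)) \<le> Re (trace (E ** X))"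
proof -
  have "Re (trace (E ** X)) = (\<Sum>i\<in>UNIV. \<Sum>k\<in>UNIV. Re (E$i$k * X$k$i))"
    by (simp add: trace_def matrix_matrix_mult_def Re_sum)
  moreover have "- cmod (X$k$i) \<le> Re (E$i$k * X$k$i)" for i k
  proof -
    have "cmod (E$i$k * X$k$i) \<le> cmod (X$k$i)"
      using entry_bound[OF pE pI, of i k] by (simp add: norm_mult mult_left_le_one_le)
    moreover have "- cmod (E$i$k * X$k$i) \<le> Re (E$i$k * X$k$i)"
      using abs_Re_le_cmod[of "E$i$k * X$k$i"] by linarith
    ultimately show ?thesis by linarith
  qed
  ultimately show ?thesis
    by (simp add: sum_negf[symmetric] sum_mono)
qed

lemma sh_entry: "sh a b H $ i $ j = (if i = j then a else 0) + b * H$i$j"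
  by (simp add: sh_def)

lemma trace_sh_right: "trace (A ** sh a b H) = a * trace A + b * trace (A ** H)"
proof -
  have "(\<Sum>k\<in>UNIV. A$i$k * sh a b H $k$i) = a * A$i$i + b * (\<Sum>k\<in>UNIV. A$i$k * H$k$i)" for i
  proof -
    have "(\<Sum>k\<in>UNIV. A$i$k * sh a b H $k$i) = (\<Sum>k\<in>UNIV. A$i$k * (if k = i then a else 0)) + (\<Sum>k\<in>UNIV. b * (A$i$k * H$k$i))"
      by (simp add: sh_entry distrib_left sum.distrib algebra_simps)
    also have "(\<Sum>k\<in>UNIV. A$i$k * (if k = i then a else 0)) = a * A$i$i"
      by (subst sum_one[of i]) auto
    finally show ?thesis by (simp add: sum_distrib_left)
  qed
  then show ?thesis
    by (simp add: trace_def matrix_matrix_mult_def sum.distrib sum_distrib_left)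
qed

lemma trace_sh_left: "trace (sh a b H ** A) = a * trace A + b * trace (H ** A)"
  by (metis trace_mul_sym trace_sh_right)

lemma one_minus_sh: "mat 1 - sh a b H = sh (1 - a) (- b) H"
  by (simp add: sh_def mat_def vec_eq_iff)

lemma trace_one_minus:
  fixes A E :: "complex^'n::finite^'n"
  shows "trace (A ** (mat 1 - E)) = trace A - trace (A ** E)"
proof -
  have "A ** (mat 1 - E) + A ** E = A ** (mat 1 - E + E)" by (rule matrix_add_ldistrib[symmetric])
  also have "mat 1 - E + E = (mat 1 :: complex^'n^'n)" by simp
  finally have "A ** (mat 1 - E) + A ** E = A" by simp
  then have "trace (A ** (mat 1 - E)) + trace (A ** E) = trace A" by (metis trace_add)
  then show ?thesis by (simp add: algebra_simps)
qed



lemma herm_trace_sq: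
  fixes D :: "complex^'n::finite^'n"
  assumes "hermitian D"
  shows "Re (trace (D ** D)) = (\<Sum>i\<in>UNIV. \<Sum>k\<in>UNIV. (cmod (D$i$k))^2)"
proof -
  have "Re (D$i$k * D$k$i) = (cmod (D$i$k))^2" for i k
    using herm_entry[OF assms, of k i] complex_norm_square[of "D$i$k"]
    by (metis Re_complex_of_real)
  then show ?thesis by (simp add: trace_def matrix_matrix_mult_def)
qed

lemma nonzero_pos:
  fixes D :: "complex^'n::finite^'n"
  assumes "D $ i $ k \<noteq> 0"
  shows "0 < (\<Sum>i\<in>UNIV. \<Sum>k\<in>UNIV. (cmod (D$i$k))^2)"
proof -
  have "0 < (cmod (D$i$k))^2" using assms by simp
  also have "\<dots> \<le> (\<Sum>k\<in>UNIV. (cmod (D$i$k))^2)" by (rule member_le_sum) auto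
  also have "\<dots> \<le> (\<Sum>i\<in>UNIV. \<Sum>k\<in>UNIV. (cmod (D$i$k))^2)"
    by (rule member_le_sum[where f="\<lambda>i. \<Sum>k\<in>UNIV. (cmod (D$i$k))^2"]) (auto intro: sum_nonneg)
  finally show ?thesis .
qed

theorem lemmaS1:
  fixes \<epsilon> :: real and \<rho> X :: "complex^'n::finite^'n"
  assumes "0 < \<epsilon>" and "\<epsilon> < 1"
    and "density \<rho>"
    and "hermitian X" and "trace X = 1"
  shows "D_min \<epsilon> \<rho> X = ereal (- ln (1 - \<epsilon>)) \<longleftrightarrow> \<rho> = X"
proof -
  have hr: "hermitian \<rho>" and tr: "trace \<rho> = 1"
    using assms(3) by (auto simp: density_def psd_def)
  define S where "S = {Re (trace (E ** X)) | E. feasible_test \<epsilon> \<rho> E}"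
  have alpha: "alpha_min \<epsilon> \<rho> X = Inf S" by (simp add: alpha_min_def S_def)
  have bdd: "bdd_below S"
    unfolding bdd_below_def S_def using trace_lower[where X=X]
    by (auto simp: feasible_test_def)
  define E0 where "E0 = sh (of_real (1 - \<epsilon>)) (of_real 0) \<rho>"
  have E0c: "mat 1 - E0 = sh (of_real \<epsilon>) (of_real 0) \<rho>"
    unfolding E0_def one_minus_sh by simp
  have q1: "psd E0" unfolding E0_def using assms(2) by (intro psd_sh hr) auto
  have q2: "psd (mat 1 - E0)" unfolding E0c using assms(1) by (intro psd_sh hr) auto
  have fE0: "feasible_test \<epsilon> \<rho> E0"
    unfolding feasible_test_def using q1 q2 tr
    by (simp add: E0c trace_sh_right)
  have vE0: "Re (trace (E0 ** X)) = 1 - \<epsilon>"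
    by (simp add: E0_def trace_sh_left assms(5))
  have memS: "1 - \<epsilon> \<in> S" using fE0 vE0 unfolding S_def by force
  show ?thesis
  proof
    assume "\<rho> = X"
    have "\<forall>x\<in>S. 1 - \<epsilon> \<le> x"
    proof
      fix x assume "x \<in> S"
      then obtain E where fE: "feasible_test \<epsilon> \<rho> E" and x: "x = Re (trace (E ** X))"
        unfolding S_def by blast
      have "Re (trace (\<rho> ** (mat 1 - E))) \<le> \<epsilon>" using fE by (simp add: feasible_test_def)
      then have "1 - Re (trace (\<rho> ** E)) \<le> \<epsilon>" by (simp add: trace_one_minus tr)
      moreover have "trace (E ** X) = trace (\<rho> ** E)" using \<open>\<rho> = X\<close> trace_mul_sym by metis
      ultimately show "1 - \<epsilon> \<le> x" using x by simp
    qed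
    then have "Inf S = 1 - \<epsilon>" using memS by (intro cInf_eq_minimum) auto
    then show "D_min \<epsilon> \<rho> X = ereal (- ln (1 - \<epsilon>))"
      using assms(2) by (simp add: D_min_def alpha)
  next
    assume Dm: "D_min \<epsilon> \<rho> X = ereal (- ln (1 - \<epsilon>))"
    have apos: "0 < Inf S"
    proof (rule ccontr)
      assume "\<not> 0 < Inf S"
      then have "D_min \<epsilon> \<rho> X = \<infinity>" by (simp add: D_min_def alpha)
      then show False using Dm by simp
    qed
    then have "ln (Inf S) = ln (1 - \<epsilon>)" using Dm by (simp add: D_min_def alpha)
    then have aeq: "Inf S = 1 - \<epsilon>" using apos assms(2) by simp
    show "\<rho> = X"
    proof (rule ccontr)
      assume ne: "\<rho> \<noteq> X"
      define D where "D = \<rho> - X"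
      have hD: "hermitian D" using hr assms(4)
        unfolding D_def hermitian_def conj_transpose_def by (auto simp: vec_eq_iff)
      obtain i k where nz: "D$i$k \<noteq> 0" using ne unfolding D_def by (auto simp: vec_eq_iff)
      define c where "c = - Re (trace (\<rho> ** D))"
      define H where "H = sh (of_real c) 1 D"
      have hH: "hermitian H" unfolding H_def using hD by (intro hermitian_sh) auto
      define K where "K = (\<Sum>k\<in>UNIV. \<Sum>l\<in>UNIV. cmod (H$k$l))"
      have K0: "0 \<le> K" unfolding K_def by (intro sum_nonneg) auto
      define m where "m = min \<epsilon> (1 - \<epsilon>)"
      have m0: "0 < m" using assms(1,2) by (simp add: m_def)
      define t where "t = m / (K + 1)"
      have t0: "0 < t" using m0 K0 by (simp add: t_def)
      have tK: "\<bar>t\<bar> * K \<le> m"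
      proof -
        have "t * K \<le> t * (K + 1)" using t0 by simp
        also have "\<dots> = m" using K0 by (simp add: t_def)
        finally show ?thesis using t0 by simp
      qed
      define E1 where "E1 = sh (of_real (1 - \<epsilon>)) (of_real t) H"
      have E1c: "mat 1 - E1 = sh (of_real \<epsilon>) (of_real (- t)) H"
        unfolding E1_def one_minus_sh by simp
      have p1: "psd E1" unfolding E1_def
        using tK assms(2) by (intro psd_sh hH) (auto simp: m_def K_def)
      have p2: "psd (mat 1 - E1)" unfolding E1c
        using tK assms(1) by (intro psd_sh hH) (auto simp: m_def K_def)
      have trH: "Re (trace (\<rho> ** H)) = 0"
        by (simp add: H_def trace_sh_right tr c_def)
      have "Re (trace (\<rho> ** (mat 1 - E1))) = \<epsilon>"
        unfolding E1c trace_sh_right using trH tr by simp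
      then have fE1: "feasible_test \<epsilon> \<rho> E1" using p1 p2 by (simp add: feasible_test_def)
      have DD: "trace (D ** \<rho>) = trace (D ** X) + trace (D ** D)"
      proof -
        have "D ** X + D ** D = D ** (X + D)" by (rule matrix_add_ldistrib[symmetric])
        also have "X + D = \<rho>" by (simp add: D_def)
        finally show ?thesis by (metis trace_add)
      qed
      have "Re (trace (H ** X)) = c + Re (trace (D ** X))"
        by (simp add: H_def trace_sh_left assms(5))
      also have "\<dots> = - Re (trace (D ** D))"
        unfolding c_def trace_mul_sym[of \<rho> D] DD by simp
      finally have trHX: "Re (trace (H ** X)) = - Re (trace (D ** D))" .
      have pos: "0 < Re (trace (D ** D))"
        unfolding herm_trace_sq[OF hD] by (rule nonzero_pos[OF nz])
      have "Re (trace (E1 ** X)) = (1 - \<epsilon>) - t * Re (trace (D ** D))"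
        unfolding E1_def trace_sh_left using trHX assms(5) by simp
      also have "\<dots> < 1 - \<epsilon>" using t0 pos by simp
      finally have lt: "Re (trace (E1 ** X)) < 1 - \<epsilon>" .
      have "Re (trace (E1 ** X)) \<in> S" using fE1 unfolding S_def by blast
      then have "Inf S \<le> Re (trace (E1 ** X))" using bdd by (rule cInf_lower)
      then show False using lt aeq by simp
    qed
  qed
qed


end
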